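(* Let $f,g\colon M^n\to\mathbb{R}^N$ be immersions and let $\Phi$ be a $(1,1)$-tensor field on $M^n$ with $g_*=f_*\circ\Phi$. Let $\nabla,\tilde\nabla$ be the Levi-Civita connections of the metrics induced by $f$ and $g$, respectively, and $\alpha_f,\alpha_g$ their second fundamental forms. Then for all $X,Y\in TM$, $$\Phi\tilde\nabla_XY=\nabla_X\Phi Y\quad\text{and}\quad \alpha_g(X,Y)=\alpha_f(\Phi X,Y).$$
   Context: Since $g_*(T_pM)=f_*(T_pM)$, the normal spaces of $f$ and $g$ at each point coincide, so $\alpha_g$ and $\alpha_f$ take values in the same normal bundle. *)

theory Defs
  imports "HOL-Analysis.Analysis"
begin

text \<open>Local model: the manifold M is an open set U in a Euclidean space 'a (= R^n),
  the ambient space is a Euclidean space 'b (= R^N).  Vector fields on U are maps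
  U -> 'a (coordinate representation).\<close>

coinductive smooth_on :: "'a::euclidean_space set \<Rightarrow> ('a \<Rightarrow> 'b::real_normed_vector) \<Rightarrow> bool" where
  "continuous_on U f \<Longrightarrow> f differentiable_on U \<Longrightarrow>
   (\<forall>v. smooth_on U (\<lambda>x. frechet_derivative f (at x) v)) \<Longrightarrow> smooth_on U f"

definition dd :: "('a::euclidean_space \<Rightarrow> 'b::real_normed_vector) \<Rightarrow> ('a \<Rightarrow> 'a) \<Rightarrow> 'a \<Rightarrow> 'b" where
  "dd h X x = frechet_derivative h (at x) (X x)"

definition immersion :: "'a::euclidean_space set \<Rightarrow> ('a \<Rightarrow> 'b::euclidean_space) \<Rightarrow> bool" where
  "immersion U f \<longleftrightarrow> smooth_on U f \<and> (\<forall>x\<in>U. inj (frechet_derivative f (at x)))"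

definition push :: "('a::euclidean_space \<Rightarrow> 'b::euclidean_space) \<Rightarrow> ('a \<Rightarrow> 'a) \<Rightarrow> 'a \<Rightarrow> 'b" where
  "push f Y x = frechet_derivative f (at x) (Y x)"

definition induced_metric :: "('a::euclidean_space \<Rightarrow> 'b::euclidean_space) \<Rightarrow> 'a \<Rightarrow> 'a \<Rightarrow> 'a \<Rightarrow> real" where
  "induced_metric f x u v = frechet_derivative f (at x) u \<bullet> frechet_derivative f (at x) v"

definition levi_civita :: "'a::euclidean_space set \<Rightarrow> ('a \<Rightarrow> 'a \<Rightarrow> 'a \<Rightarrow> real)
    \<Rightarrow> (('a \<Rightarrow> 'a) \<Rightarrow> ('a \<Rightarrow> 'a) \<Rightarrow> 'a \<Rightarrow> 'a) \<Rightarrow> bool" where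
  "levi_civita U G nab \<longleftrightarrow>
    (\<forall>X Y. smooth_on U X \<longrightarrow> smooth_on U Y \<longrightarrow> smooth_on U (nab X Y)) \<and>
    (\<forall>X1 X2 Y x. smooth_on U X1 \<longrightarrow> smooth_on U X2 \<longrightarrow> smooth_on U Y \<longrightarrow> x \<in> U \<longrightarrow>
        nab (\<lambda>y. X1 y + X2 y) Y x = nab X1 Y x + nab X2 Y x) \<and>
    (\<forall>X Y1 Y2 x. smooth_on U X \<longrightarrow> smooth_on U Y1 \<longrightarrow> smooth_on U Y2 \<longrightarrow> x \<in> U \<longrightarrow>
        nab X (\<lambda>y. Y1 y + Y2 y) x = nab X Y1 x + nab X Y2 x) \<and>
    (\<forall>h X Y x. smooth_on U h \<longrightarrow> smooth_on U X \<longrightarrow> smooth_on U Y \<longrightarrow> x \<in> U \<longrightarrow>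
        nab (\<lambda>y. h y *\<^sub>R X y) Y x = h x *\<^sub>R nab X Y x) \<and>
    (\<forall>h X Y x. smooth_on U h \<longrightarrow> smooth_on U X \<longrightarrow> smooth_on U Y \<longrightarrow> x \<in> U \<longrightarrow>
        nab X (\<lambda>y. h y *\<^sub>R Y y) x = dd h X x *\<^sub>R Y x + h x *\<^sub>R nab X Y x) \<and>
    (\<forall>X Y x. smooth_on U X \<longrightarrow> smooth_on U Y \<longrightarrow> x \<in> U \<longrightarrow>
        nab X Y x - nab Y X x = dd Y X x - dd X Y x) \<and>
    (\<forall>X Y Z x. smooth_on U X \<longrightarrow> smooth_on U Y \<longrightarrow> smooth_on U Z \<longrightarrow> x \<in> U \<longrightarrow>
        dd (\<lambda>y. G y (Y y) (Z y)) X x = G x (nab X Y x) (Z x) + G x (Y x) (nab X Z x))"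

definition normal_part :: "('a::euclidean_space \<Rightarrow> 'b::euclidean_space) \<Rightarrow> 'a \<Rightarrow> 'b \<Rightarrow> 'b" where
  "normal_part f x w = (THE n. (\<forall>v. n \<bullet> frechet_derivative f (at x) v = 0) \<and>
                                 w - n \<in> range (frechet_derivative f (at x)))"

definition sff :: "('a::euclidean_space \<Rightarrow> 'b::euclidean_space) \<Rightarrow> ('a \<Rightarrow> 'a) \<Rightarrow> ('a \<Rightarrow> 'a) \<Rightarrow> 'a \<Rightarrow> 'b" where
  "sff f X Y x = normal_part f x (dd (push f Y) X x)"

end

theory Submission
  imports Defs
begin

lemma smooth_onD:
  assumes "smooth_on U h"
  shows "continuous_on U h" "h differentiable_on U" "\<And>v. smooth_on U (\<lambda>x. frechet_derivative h (at x) v)"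
  using assms by (auto elim: smooth_on.cases)

lemma smooth_has_deriv:
  assumes "open U" "smooth_on U h" "x \<in> U"
  shows "(h has_derivative frechet_derivative h (at x)) (at x)"
  using smooth_onD(2)[OF assms(2)] assms differentiable_on_eq_differentiable_at frechet_derivative_works by blast

lemma smooth_linear_deriv:
  assumes "open U" "smooth_on U h" "x \<in> U"
  shows "linear (frechet_derivative h (at x))"
  using smooth_has_deriv[OF assms] has_derivative_linear by blast

lemma frechet_local:
  assumes "open U" "x \<in> U" "\<And>y. y \<in> U \<Longrightarrow> h y = k y"
  shows "frechet_derivative h (at x) = frechet_derivative k (at x)"
proof -
  have "(h has_derivative f') (at x) \<longleftrightarrow> (k has_derivative f') (at x)" for f'
    using has_derivative_transform_within_open[OF _ assms(1,2), of h f' UNIV k]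
      has_derivative_transform_within_open[OF _ assms(1,2), of k f' UNIV h] assms(3) by auto
  then show ?thesis unfolding frechet_derivative_def by simp
qed

lemma smooth_cong:
  assumes "open U" "smooth_on U h" "\<And>y. y \<in> U \<Longrightarrow> h y = k y"
  shows "smooth_on U k"
proof -
  have "\<exists>h. smooth_on U h \<and> (\<forall>y\<in>U. h y = k y)" using assms by blast
  then show ?thesis
  proof (coinduction arbitrary: k)
    case (smooth_on k)
    then obtain h where h: "smooth_on U h" "\<forall>y\<in>U. h y = k y" by blast
    have c1: "continuous_on U k" using smooth_onD(1)[OF h(1)] h(2) continuous_on_cong by force
    have c2: "k differentiable_on U"
      unfolding differentiable_on_eq_differentiable_at[OF assms(1)]
    proof
      fix y assume y: "y \<in> U"
      have "(h has_derivative frechet_derivative h (at y)) (at y)" by (rule smooth_has_deriv[OF assms(1) h(1) y])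
      from has_derivative_transform_within_open[OF this assms(1) y, of k] h(2)
      show "k differentiable at y" unfolding differentiable_def by auto
    qed
    have c3: "\<exists>h'. smooth_on U h' \<and> (\<forall>y\<in>U. h' y = frechet_derivative k (at y) v)" for v
    proof (intro exI conjI)
      show "smooth_on U (\<lambda>x. frechet_derivative h (at x) v)" by (rule smooth_onD(3)[OF h(1)])
      show "\<forall>y\<in>U. frechet_derivative h (at y) v = frechet_derivative k (at y) v"
        using frechet_local[OF assms(1), of _ h k] h(2) by auto
    qed
    show ?case
      apply (rule exI[of _ U], rule exI[of _ k], intro conjI refl c1 c2 allI disjI1)
      apply (rule exI, rule conjI, rule refl, rule conjI, rule refl)
      apply (rule c3)
      done
  qed
qed

lemma smooth_const: "smooth_on U (\<lambda>_. c)"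
proof -
  define k where "k = (\<lambda>_::'a. c)"
  have "\<exists>c. k = (\<lambda>_. c)" by (auto simp: k_def)
  then have "smooth_on U k"
    by (coinduction arbitrary: k) (auto simp: frechet_derivative_const)
  then show ?thesis by (simp add: k_def)
qed

lemma hd_sumlist:
  fixes F :: "_ \<Rightarrow> _ \<Rightarrow> 'b::real_normed_vector"
  assumes "\<forall>p\<in>set L. (F p has_derivative F' p) (at x)"
  shows "((\<lambda>y. \<Sum>p\<leftarrow>L. F p y) has_derivative (\<lambda>h. \<Sum>p\<leftarrow>L. F' p h)) (at x)"
  using assms by (induction L) (auto intro!: has_derivative_add)

lemma cont_sumlist:
  fixes F :: "_ \<Rightarrow> _ \<Rightarrow> 'b::real_normed_vector"
  assumes "\<forall>p\<in>set L. continuous_on U (F p)"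
  shows "continuous_on U (\<lambda>y. \<Sum>p\<leftarrow>L. F p y)"
  using assms by (induction L) (auto simp: continuous_on_add)

lemma sumlist_concat_aux:
  "(\<Sum>p\<leftarrow>concat (map G L). F p) = (\<Sum>q\<leftarrow>L. \<Sum>p\<leftarrow>G q. F p)"
  by (induction L) auto

lemma smooth_sumprod:
  fixes L :: "(('a::euclidean_space \<Rightarrow> real) \<times> ('a \<Rightarrow> 'b::real_normed_vector)) list"
  assumes U: "open U" and "\<forall>(a,b)\<in>set L. smooth_on U a \<and> smooth_on U b"
    and "\<forall>y\<in>U. k y = (\<Sum>(a,b)\<leftarrow>L. a y *\<^sub>R b y)"
  shows "smooth_on U k"
proof -
  have "\<exists>L. (\<forall>(a,b)\<in>set L. smooth_on U a \<and> smooth_on U b) \<and> (\<forall>y\<in>U. k y = (\<Sum>(a,b)\<leftarrow>L. a y *\<^sub>R b y))"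
    using assms by blast
  then show ?thesis
  proof (coinduction arbitrary: k)
    case (smooth_on k)
    then obtain L where L: "\<forall>(a,b)\<in>set L. smooth_on U a \<and> smooth_on U b"
      "\<forall>y\<in>U. k y = (\<Sum>(a,b)\<leftarrow>L. a y *\<^sub>R b y)" by blast
    define S where "S = (\<lambda>y. \<Sum>(a,b)\<leftarrow>L. a y *\<^sub>R b y)"
    have hd: "(S has_derivative (\<lambda>h. \<Sum>(a,b)\<leftarrow>L. a y *\<^sub>R frechet_derivative b (at y) h + frechet_derivative a (at y) h *\<^sub>R b y)) (at y)"
      if "y \<in> U" for y
    proof -
      have "\<forall>p\<in>set L. ((\<lambda>y. fst p y *\<^sub>R snd p y) has_derivative
          (\<lambda>h. fst p y *\<^sub>R frechet_derivative (snd p) (at y) h + frechet_derivative (fst p) (at y) h *\<^sub>R snd p y)) (at y)"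
      proof
        fix p assume "p \<in> set L"
        then have "smooth_on U (fst p)" "smooth_on U (snd p)" using L(1) by auto
        then show "((\<lambda>y. fst p y *\<^sub>R snd p y) has_derivative
          (\<lambda>h. fst p y *\<^sub>R frechet_derivative (snd p) (at y) h + frechet_derivative (fst p) (at y) h *\<^sub>R snd p y)) (at y)"
          by (intro has_derivative_scaleR smooth_has_deriv[OF U _ that])
      qed
      from hd_sumlist[OF this] show ?thesis unfolding S_def by (simp add: split_def)
    qed
    have "\<forall>p\<in>set L. continuous_on U (\<lambda>x. fst p x *\<^sub>R snd p x)"
      using L(1) by (auto intro!: continuous_on_scaleR dest!: smooth_onD(1))
    from cont_sumlist[OF this] have "continuous_on U S" unfolding S_def by (simp add: split_def)
    then have c1: "continuous_on U k" using L(2) S_def continuous_on_cong by force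
    have c2: "k differentiable_on U"
      unfolding differentiable_on_eq_differentiable_at[OF U]
    proof
      fix y assume y: "y \<in> U"
      show "k differentiable at y"
        using has_derivative_transform_within_open[OF hd[OF y] U y, of k] L(2) unfolding S_def differentiable_def
        by auto
    qed
    have c3: "\<exists>L'. (\<forall>(a,b)\<in>set L'. smooth_on U a \<and> smooth_on U b) \<and>
        (\<forall>y\<in>U. frechet_derivative k (at y) v = (\<Sum>(a,b)\<leftarrow>L'. a y *\<^sub>R b y))" for v
    proof (intro exI conjI)
      let ?L' = "concat (map (\<lambda>(a,b). [(a, \<lambda>y. frechet_derivative b (at y) v), (\<lambda>y. frechet_derivative a (at y) v, b)]) L)"
      show "\<forall>(a,b)\<in>set ?L'. smooth_on U a \<and> smooth_on U b"
      proof
        fix p assume "p \<in> set ?L'"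
        then obtain a b where ab: "(a,b) \<in> set L" and
          p: "p \<in> set [(a, \<lambda>y. frechet_derivative b (at y) v), (\<lambda>y. frechet_derivative a (at y) v, b)]"
          by auto
        have sa: "smooth_on U a" and sb: "smooth_on U b" using L(1) ab by auto
        show "case p of (a,b) \<Rightarrow> smooth_on U a \<and> smooth_on U b"
          using p sa sb smooth_onD(3)[OF sa, of v] smooth_onD(3)[OF sb, of v] by auto
      qed
      show "\<forall>y\<in>U. frechet_derivative k (at y) v = (\<Sum>(a,b)\<leftarrow>?L'. a y *\<^sub>R b y)"
      proof
        fix y assume y: "y \<in> U"
        have "frechet_derivative k (at y) = frechet_derivative S (at y)"
          using frechet_local[OF U y, of k S] L(2) S_def by auto
        also have "\<dots> = (\<lambda>h. \<Sum>(a,b)\<leftarrow>L. a y *\<^sub>R frechet_derivative b (at y) h + frechet_derivative a (at y) h *\<^sub>R b y)"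
          using frechet_derivative_at[OF hd[OF y]] by simp
        finally have 1: "frechet_derivative k (at y) v = (\<Sum>(a,b)\<leftarrow>L. a y *\<^sub>R frechet_derivative b (at y) v + frechet_derivative a (at y) v *\<^sub>R b y)"
          by simp
        have 2: "(\<Sum>(a,b)\<leftarrow>?L'. a y *\<^sub>R b y) = (\<Sum>q\<leftarrow>L. \<Sum>p\<leftarrow>(case q of (a,b) \<Rightarrow> [(a, \<lambda>y. frechet_derivative b (at y) v), (\<lambda>y. frechet_derivative a (at y) v, b)]). (case p of (a,b) \<Rightarrow> a y *\<^sub>R b y))"
          by (rule sumlist_concat_aux)
        have 3: "map (\<lambda>q. \<Sum>p\<leftarrow>(case q of (a,b) \<Rightarrow> [(a, \<lambda>y. frechet_derivative b (at y) v), (\<lambda>y. frechet_derivative a (at y) v, b)]). (case p of (a,b) \<Rightarrow> a y *\<^sub>R b y)) L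
           = map (\<lambda>(a,b). a y *\<^sub>R frechet_derivative b (at y) v + frechet_derivative a (at y) v *\<^sub>R b y) L"
        proof (rule map_cong[OF refl])
          fix q :: "('a \<Rightarrow> real) \<times> ('a \<Rightarrow> 'b)"
          obtain a b where q: "q = (a,b)" by (cases q)
          show "(\<Sum>p\<leftarrow>(case q of (a,b) \<Rightarrow> [(a, \<lambda>y. frechet_derivative b (at y) v), (\<lambda>y. frechet_derivative a (at y) v, b)]). (case p of (a,b) \<Rightarrow> a y *\<^sub>R b y))
             = (case q of (a,b) \<Rightarrow> a y *\<^sub>R frechet_derivative b (at y) v + frechet_derivative a (at y) v *\<^sub>R b y)"
            unfolding q by simp
        qed
        show "frechet_derivative k (at y) v = (\<Sum>(a,b)\<leftarrow>?L'. a y *\<^sub>R b y)"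
          unfolding 1 2 3 ..
      qed
    qed
    show ?case
      apply (rule exI[of _ U], rule exI[of _ k], intro conjI refl c1 c2 allI disjI1)
      apply (rule exI, rule conjI, rule refl, rule conjI, rule refl)
      apply (rule c3)
      done
  qed
qed

lemma smooth_mult:
  assumes "open U" "smooth_on U a" "smooth_on U b"
  shows "smooth_on U (\<lambda>y. a y *\<^sub>R b y)"
  by (rule smooth_sumprod[OF assms(1), where L="[(a,b)]"]) (use assms in auto)

lemma smooth_add:
  assumes "open U" "smooth_on U a" "smooth_on U b"
  shows "smooth_on U (\<lambda>y. a y + b y)"
  by (rule smooth_sumprod[OF assms(1), where L="[(\<lambda>_. 1, a), (\<lambda>_. 1, b)]"]) (use assms smooth_const in auto)

lemma smooth_sum:
  assumes "open U" "finite I" "\<forall>i\<in>I. smooth_on U (F i)"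
  shows "smooth_on U (\<lambda>y. \<Sum>i\<in>I. F i y)"
  using assms(2,3)
proof (induction I rule: finite_induct)
  case empty
  then show ?case by (simp add: smooth_const)
next
  case (insert x F)
  then show ?case by (simp add: smooth_add[OF assms(1)])
qed

lemma smooth_linear_comp:
  assumes U: "open U" and L: "bounded_linear L" and "smooth_on U h"
  shows "smooth_on U (\<lambda>y. L (h y))"
proof -
  define k where "k = (\<lambda>y. L (h y))"
  have "\<exists>h. smooth_on U h \<and> (\<forall>y\<in>U. k y = L (h y))" using assms k_def by blast
  then have "smooth_on U k"
  proof (coinduction arbitrary: k)
    case (smooth_on k)
    then obtain h where h: "smooth_on U h" "\<forall>y\<in>U. k y = L (h y)" by blast
    have hd: "(k has_derivative (\<lambda>z. L (frechet_derivative h (at y) z))) (at y)" if y: "y \<in> U" for y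
      using has_derivative_transform_within_open[OF bounded_linear.has_derivative[OF L smooth_has_deriv[OF U h(1) y]] U y, of k]
        h(2) by auto
    have c1: "continuous_on U k"
      using bounded_linear.continuous_on[OF L smooth_onD(1)[OF h(1)]] h(2) continuous_on_cong by force
    have c2: "k differentiable_on U"
      unfolding differentiable_on_eq_differentiable_at[OF U] differentiable_def using hd by blast
    have c3: "\<exists>h'. smooth_on U h' \<and> (\<forall>y\<in>U. frechet_derivative k (at y) v = L (h' y))" for v
    proof (intro exI conjI)
      show "smooth_on U (\<lambda>x. frechet_derivative h (at x) v)" by (rule smooth_onD(3)[OF h(1)])
      show "\<forall>y\<in>U. frechet_derivative k (at y) v = L (frechet_derivative h (at y) v)"
        using frechet_derivative_at[OF hd] by (metis)
    qed
    show ?case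
      apply (rule exI[of _ U], rule exI[of _ k], intro conjI refl c1 c2 allI disjI1)
      apply (rule exI, rule conjI, rule refl, rule conjI, rule refl)
      apply (rule c3)
      done
  qed
  then show ?thesis by (simp add: k_def)
qed

lemma smooth_inner_const:
  fixes h :: "'a::euclidean_space \<Rightarrow> 'b::real_inner"
  assumes "open U" "smooth_on U h"
  shows "smooth_on U (\<lambda>y. h y \<bullet> c)"
  using smooth_linear_comp[OF assms(1) bounded_linear_inner_left assms(2)] .

lemma smooth_Phi:
  fixes Y :: "'a::euclidean_space \<Rightarrow> 'a" and \<Phi> :: "'a \<Rightarrow> 'a \<Rightarrow> 'b::real_normed_vector"
  assumes U: "open U" and lin: "\<forall>x\<in>U. linear (\<Phi> x)" and sP: "\<forall>v. smooth_on U (\<lambda>x. \<Phi> x v)"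
    and sY: "smooth_on U Y"
  shows "smooth_on U (\<lambda>y. \<Phi> y (Y y))"
proof (rule smooth_cong[OF U])
  show "smooth_on U (\<lambda>y. \<Sum>i\<in>Basis. (Y y \<bullet> i) *\<^sub>R \<Phi> y i)"
    by (rule smooth_sum[OF U]) (auto intro!: smooth_mult[OF U] smooth_inner_const[OF U sY] sP[rule_format])
  fix y assume y: "y \<in> U"
  have "\<Phi> y (Y y) = \<Phi> y (\<Sum>i\<in>Basis. (Y y \<bullet> i) *\<^sub>R i)" by (simp add: euclidean_representation)
  also have "\<dots> = (\<Sum>i\<in>Basis. (Y y \<bullet> i) *\<^sub>R \<Phi> y i)"
    using lin y by (simp add: linear_sum linear_scale)
  finally show "(\<Sum>i\<in>Basis. (Y y \<bullet> i) *\<^sub>R \<Phi> y i) = \<Phi> y (Y y)" by simp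
qed

definition D2 :: "('a::euclidean_space \<Rightarrow> 'b::real_normed_vector) \<Rightarrow> 'a \<Rightarrow> 'a \<Rightarrow> 'a \<Rightarrow> 'b" where
  "D2 f x u v = frechet_derivative (\<lambda>y. frechet_derivative f (at y) v) (at x) u"

lemma D2_smooth:
  assumes "smooth_on U f"
  shows "smooth_on U (\<lambda>y. D2 f y u v)"
  unfolding D2_def using smooth_onD(3)[OF smooth_onD(3)[OF assms]] .

lemma D2_has_deriv:
  assumes U: "open U" and f: "smooth_on U f" and x: "x \<in> U"
  shows "((\<lambda>y. frechet_derivative f (at y) v) has_derivative (\<lambda>u. D2 f x u v)) (at x)"
  unfolding D2_def using smooth_has_deriv[OF U smooth_onD(3)[OF f] x] by (metis (no_types) ext)

lemma D2_lin_v: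
  assumes U: "open U" and f: "smooth_on U f" and x: "x \<in> U"
  shows "D2 f x u v = (\<Sum>i\<in>Basis. (v \<bullet> i) *\<^sub>R D2 f x u i)"
proof -
  have eq: "frechet_derivative f (at y) v = (\<Sum>i\<in>Basis. (v \<bullet> i) *\<^sub>R frechet_derivative f (at y) i)"
    if "y \<in> U" for y
  proof -
    have lin: "linear (frechet_derivative f (at y))" by (rule smooth_linear_deriv[OF U f that])
    have "frechet_derivative f (at y) v = frechet_derivative f (at y) (\<Sum>i\<in>Basis. (v \<bullet> i) *\<^sub>R i)"
      by (simp add: euclidean_representation)
    also have "\<dots> = (\<Sum>i\<in>Basis. (v \<bullet> i) *\<^sub>R frechet_derivative f (at y) i)"
      using lin by (simp add: linear_sum linear_scale)
    finally show ?thesis .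
  qed
  have hd: "((\<lambda>y. \<Sum>i\<in>Basis. (v \<bullet> i) *\<^sub>R frechet_derivative f (at y) i) has_derivative
       (\<lambda>u. \<Sum>i\<in>Basis. (v \<bullet> i) *\<^sub>R D2 f x u i)) (at x)"
    by (intro has_derivative_sum has_derivative_scaleR_right D2_has_deriv[OF U f x])
  have "((\<lambda>y. frechet_derivative f (at y) v) has_derivative
       (\<lambda>u. \<Sum>i\<in>Basis. (v \<bullet> i) *\<^sub>R D2 f x u i)) (at x)"
    using has_derivative_transform_within_open[OF hd U x] eq by auto
  from has_derivative_unique[OF D2_has_deriv[OF U f x] this]
  show ?thesis by metis
qed

definition Dfr :: "('a::euclidean_space \<Rightarrow> 'b::real_normed_vector) \<Rightarrow> 'a \<Rightarrow> 'a \<Rightarrow> 'b" where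
  "Dfr f x = frechet_derivative f (at x)"

lemma push_has_deriv:
  fixes f :: "'a::euclidean_space \<Rightarrow> 'b::euclidean_space"
  assumes U: "open U" and f: "smooth_on U f" and B: "smooth_on U B" and x: "x \<in> U"
  shows "(push f B has_derivative (\<lambda>u. D2 f x u (B x) + frechet_derivative f (at x) (frechet_derivative B (at x) u))) (at x)"
proof -
  have eq: "push f B y = (\<Sum>i\<in>Basis. (B y \<bullet> i) *\<^sub>R frechet_derivative f (at y) i)"
    if "y \<in> U" for y
  proof -
    have lin: "linear (frechet_derivative f (at y))" by (rule smooth_linear_deriv[OF U f that])
    have "push f B y = frechet_derivative f (at y) (\<Sum>i\<in>Basis. (B y \<bullet> i) *\<^sub>R i)"
      by (simp add: euclidean_representation push_def)
    also have "\<dots> = (\<Sum>i\<in>Basis. (B y \<bullet> i) *\<^sub>R frechet_derivative f (at y) i)"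
      using lin by (simp add: linear_sum linear_scale)
    finally show ?thesis .
  qed
  have hd: "((\<lambda>y. \<Sum>i\<in>Basis. (B y \<bullet> i) *\<^sub>R frechet_derivative f (at y) i) has_derivative
       (\<lambda>u. \<Sum>i\<in>Basis. (B x \<bullet> i) *\<^sub>R D2 f x u i + (frechet_derivative B (at x) u \<bullet> i) *\<^sub>R frechet_derivative f (at x) i)) (at x)"
    by (intro has_derivative_sum has_derivative_scaleR D2_has_deriv[OF U f x]
        has_derivative_inner_left smooth_has_deriv[OF U B x])
  have lin: "linear (frechet_derivative f (at x))" by (rule smooth_linear_deriv[OF U f x])
  have feq: "(\<lambda>u. \<Sum>i\<in>Basis. (B x \<bullet> i) *\<^sub>R D2 f x u i + (frechet_derivative B (at x) u \<bullet> i) *\<^sub>R frechet_derivative f (at x) i)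
      = (\<lambda>u. D2 f x u (B x) + frechet_derivative f (at x) (frechet_derivative B (at x) u))"
  proof
    fix u
    have "frechet_derivative f (at x) (frechet_derivative B (at x) u)
        = frechet_derivative f (at x) (\<Sum>i\<in>Basis. (frechet_derivative B (at x) u \<bullet> i) *\<^sub>R i)"
      by (simp add: euclidean_representation)
    also have "\<dots> = (\<Sum>i\<in>Basis. (frechet_derivative B (at x) u \<bullet> i) *\<^sub>R frechet_derivative f (at x) i)"
      using lin by (simp add: linear_sum linear_scale)
    finally show "(\<Sum>i\<in>Basis. (B x \<bullet> i) *\<^sub>R D2 f x u i + (frechet_derivative B (at x) u \<bullet> i) *\<^sub>R frechet_derivative f (at x) i)
      = D2 f x u (B x) + frechet_derivative f (at x) (frechet_derivative B (at x) u)"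
      using D2_lin_v[OF U f x, of u "B x"] by (simp add: sum.distrib)
  qed
  show ?thesis
    using has_derivative_transform_within_open[OF hd U x, of "push f B"] eq feq by auto
qed

lemma mvt_line:
  fixes k :: "'a::euclidean_space \<Rightarrow> 'b::real_inner"
  assumes s: "0 < s" and hd: "\<And>t. 0 \<le> t \<Longrightarrow> t \<le> s \<Longrightarrow> (k has_derivative K t) (at (p + t *\<^sub>R q))"
  shows "\<exists>t\<in>{0<..<s}. (k (p + s *\<^sub>R q) - k p) \<bullet> w = s * (K t q \<bullet> w)"
proof -
  have "\<exists>t\<in>{0<..<s}. (\<lambda>t. k (p + t *\<^sub>R q) \<bullet> w) s - (\<lambda>t. k (p + t *\<^sub>R q) \<bullet> w) 0
      = (\<lambda>t d. K t (d *\<^sub>R q) \<bullet> w) t (s - 0)"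
  proof (rule mvt_simple[OF s])
    fix t assume t: "0 \<le> t" "t \<le> s"
    have l: "((\<lambda>t. p + t *\<^sub>R q) has_derivative (\<lambda>d. d *\<^sub>R q)) (at t within {0..s})"
      by (intro derivative_eq_intros) auto
    show "((\<lambda>t. k (p + t *\<^sub>R q) \<bullet> w) has_derivative (\<lambda>d. K t (d *\<^sub>R q) \<bullet> w)) (at t within {0..s})"
      using has_derivative_inner_left[OF has_derivative_compose[OF l hd[OF t]]] .
  qed
  then obtain t where t: "t \<in> {0<..<s}" and eq: "k (p + s *\<^sub>R q) \<bullet> w - k p \<bullet> w = K t (s *\<^sub>R q) \<bullet> w"
    by auto
  have "linear (K t)" using has_derivative_linear[OF hd] t by auto
  then have "K t (s *\<^sub>R q) = s *\<^sub>R K t q" by (simp add: linear_scale)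
  with eq t show ?thesis by (auto simp: inner_diff_left)
qed

lemma seg_in:
  assumes cb: "cball x (s * (norm u + norm v)) \<subseteq> U" and "0 \<le> t" "t \<le> s" "0 \<le> r" "r \<le> s"
  shows "x + t *\<^sub>R u + r *\<^sub>R v \<in> U" "dist (x + t *\<^sub>R u + r *\<^sub>R v) x \<le> s * (norm u + norm v)"
proof -
  have "norm (t *\<^sub>R u + r *\<^sub>R v) \<le> norm (t *\<^sub>R u) + norm (r *\<^sub>R v)" by (rule norm_triangle_ineq)
  also have "\<dots> = t * norm u + r * norm v" using assms by simp
  also have "\<dots> \<le> s * norm u + s * norm v"
    using assms by (intro add_mono mult_right_mono) auto
  finally have *: "dist (x + t *\<^sub>R u + r *\<^sub>R v) x \<le> s * (norm u + norm v)"
    by (simp add: dist_norm algebra_simps)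
  then show "dist (x + t *\<^sub>R u + r *\<^sub>R v) x \<le> s * (norm u + norm v)" .
  from * cb show "x + t *\<^sub>R u + r *\<^sub>R v \<in> U" by (auto simp: dist_commute subset_iff)
qed

lemma delta:
  fixes h :: "'a::euclidean_space \<Rightarrow> 'b::euclidean_space"
  assumes U: "open U" and h: "smooth_on U h" and s: "0 < s"
    and cb: "cball x (s * (norm u + norm v)) \<subseteq> U"
  shows "\<exists>z. dist z x \<le> s * (norm u + norm v) \<and>
    (h (x + s *\<^sub>R u + s *\<^sub>R v) - h (x + s *\<^sub>R u) - h (x + s *\<^sub>R v) + h x) \<bullet> w = s^2 * (D2 h z v u \<bullet> w)"
proof -
  define k where "k = (\<lambda>y. h (y + s *\<^sub>R v) - h y)"
  have "\<exists>t\<in>{0<..<s}. (k (x + s *\<^sub>R u) - k x) \<bullet> w =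
     s * ((frechet_derivative h (at (x + t *\<^sub>R u + s *\<^sub>R v)) u - frechet_derivative h (at (x + t *\<^sub>R u)) u) \<bullet> w)"
  proof (rule mvt_line[OF s, where K="\<lambda>t d. frechet_derivative h (at (x + t *\<^sub>R u + s *\<^sub>R v)) d - frechet_derivative h (at (x + t *\<^sub>R u)) d"])
    fix t assume t: "0 \<le> t" "t \<le> s"
    have i1: "x + t *\<^sub>R u + s *\<^sub>R v \<in> U" using seg_in(1)[OF cb t, of s] s by auto
    have i2: "x + t *\<^sub>R u \<in> U" using seg_in(1)[OF cb t, of 0] s by auto
    have sh: "((\<lambda>y. y + s *\<^sub>R v) has_derivative (\<lambda>d. d)) (at (x + t *\<^sub>R u))"
      by (intro derivative_eq_intros) auto
    have "((\<lambda>y. h (y + s *\<^sub>R v)) has_derivative (\<lambda>d. frechet_derivative h (at (x + t *\<^sub>R u + s *\<^sub>R v)) d)) (at (x + t *\<^sub>R u))"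
      using has_derivative_compose[OF sh smooth_has_deriv[OF U h i1]] by simp
    from has_derivative_diff[OF this smooth_has_deriv[OF U h i2]]
    show "(k has_derivative (\<lambda>d. frechet_derivative h (at (x + t *\<^sub>R u + s *\<^sub>R v)) d - frechet_derivative h (at (x + t *\<^sub>R u)) d)) (at (x + t *\<^sub>R u))"
      unfolding k_def by simp
  qed
  then obtain t where t: "t \<in> {0<..<s}" and e1: "(k (x + s *\<^sub>R u) - k x) \<bullet> w =
     s * ((frechet_derivative h (at (x + t *\<^sub>R u + s *\<^sub>R v)) u - frechet_derivative h (at (x + t *\<^sub>R u)) u) \<bullet> w)"
    by blast
  define p where "p = x + t *\<^sub>R u"
  have "\<exists>r\<in>{0<..<s}. (frechet_derivative h (at (p + s *\<^sub>R v)) u - frechet_derivative h (at p) u) \<bullet> w =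
     s * (D2 h (p + r *\<^sub>R v) v u \<bullet> w)"
  proof (rule mvt_line[OF s, where k="\<lambda>y. frechet_derivative h (at y) u" and K="\<lambda>r d. D2 h (p + r *\<^sub>R v) d u"])
    fix r assume r: "0 \<le> r" "r \<le> s"
    have "p + r *\<^sub>R v \<in> U" using seg_in(1)[OF cb _ _ r, of t] t unfolding p_def by auto
    from D2_has_deriv[OF U h this]
    show "((\<lambda>y. frechet_derivative h (at y) u) has_derivative (\<lambda>d. D2 h (p + r *\<^sub>R v) d u)) (at (p + r *\<^sub>R v))" .
  qed
  then obtain r where r: "r \<in> {0<..<s}" and e2: "(frechet_derivative h (at (p + s *\<^sub>R v)) u - frechet_derivative h (at p) u) \<bullet> w =
     s * (D2 h (p + r *\<^sub>R v) v u \<bullet> w)" by blast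
  show ?thesis
  proof (intro exI conjI)
    show "dist (p + r *\<^sub>R v) x \<le> s * (norm u + norm v)"
      using seg_in(2)[OF cb, of t r] t r unfolding p_def by auto
    have "(h (x + s *\<^sub>R u + s *\<^sub>R v) - h (x + s *\<^sub>R u) - h (x + s *\<^sub>R v) + h x) = k (x + s *\<^sub>R u) - k x"
      unfolding k_def by (simp add: algebra_simps)
    then show "(h (x + s *\<^sub>R u + s *\<^sub>R v) - h (x + s *\<^sub>R u) - h (x + s *\<^sub>R v) + h x) \<bullet> w = s^2 * (D2 h (p + r *\<^sub>R v) v u \<bullet> w)"
      using e1 e2 unfolding p_def by (simp add: power2_eq_square)
  qed
qed

lemma schwarz_inner:
  fixes h :: "'a::euclidean_space \<Rightarrow> 'b::euclidean_space"
  assumes U: "open U" and h: "smooth_on U h" and x: "x \<in> U"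
  shows "D2 h x v u \<bullet> w = D2 h x u v \<bullet> w"
proof (rule ccontr)
  define A where "A = (\<lambda>y. D2 h y v u \<bullet> w)"
  define B where "B = (\<lambda>y. D2 h y u v \<bullet> w)"
  assume ne: "D2 h x v u \<bullet> w \<noteq> D2 h x u v \<bullet> w"
  define e where "e = \<bar>A x - B x\<bar> / 3"
  have e: "e > 0" using ne unfolding e_def A_def B_def by auto
  have cA: "continuous_on U A" unfolding A_def
    by (intro continuous_on_inner continuous_on_const smooth_onD(1)[OF D2_smooth[OF h]])
  have cB: "continuous_on U B" unfolding B_def
    by (intro continuous_on_inner continuous_on_const smooth_onD(1)[OF D2_smooth[OF h]])
  obtain dA where dA: "dA > 0" "\<And>y. y \<in> U \<Longrightarrow> dist y x < dA \<Longrightarrow> dist (A y) (A x) < e"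
    using cA x e unfolding continuous_on_iff by blast
  obtain dB where dB: "dB > 0" "\<And>y. y \<in> U \<Longrightarrow> dist y x < dB \<Longrightarrow> dist (B y) (B x) < e"
    using cB x e unfolding continuous_on_iff by blast
  obtain e0 where e0: "e0 > 0" "cball x e0 \<subseteq> U" using open_contains_cball U x by blast
  define m where "m = min (min dA dB) e0 / 2"
  have m: "m > 0" "m < dA" "m < dB" "m < e0" using dA dB e0 unfolding m_def by auto
  define s where "s = m / (norm u + norm v + 1)"
  have s: "s > 0" unfolding s_def using m by (simp add: add_nonneg_pos)
  have "s * (norm u + norm v) < s * (norm u + norm v + 1)" using s by simp
  also have "\<dots> = m" unfolding s_def
    using add_nonneg_pos[OF add_nonneg_nonneg[OF norm_ge_zero norm_ge_zero], of 1 u v] by simp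
  finally have sm: "s * (norm u + norm v) < m" .
  have cb: "cball x (s * (norm u + norm v)) \<subseteq> U"
  proof -
    have "s * (norm u + norm v) \<le> e0" using sm m(4) by linarith
    then have "cball x (s * (norm u + norm v)) \<subseteq> cball x e0" by (rule subset_cball)
    then show ?thesis using e0(2) by (rule order.trans)
  qed
  have cb2: "cball x (s * (norm v + norm u)) \<subseteq> U" using cb by (simp add: add.commute)
  obtain z where z: "dist z x \<le> s * (norm u + norm v)"
    "(h (x + s *\<^sub>R u + s *\<^sub>R v) - h (x + s *\<^sub>R u) - h (x + s *\<^sub>R v) + h x) \<bullet> w = s^2 * A z"
    using delta[OF U h s cb, of w] unfolding A_def by blast
  obtain z' where z': "dist z' x \<le> s * (norm v + norm u)"
    "(h (x + s *\<^sub>R v + s *\<^sub>R u) - h (x + s *\<^sub>R v) - h (x + s *\<^sub>R u) + h x) \<bullet> w = s^2 * B z'"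
    using delta[OF U h s cb2, of w] unfolding B_def by blast
  have a: "x + s *\<^sub>R v + s *\<^sub>R u = x + s *\<^sub>R u + s *\<^sub>R v" by (simp add: algebra_simps)
  have eqv: "h (x + s *\<^sub>R v + s *\<^sub>R u) - h (x + s *\<^sub>R v) - h (x + s *\<^sub>R u) + h x
      = h (x + s *\<^sub>R u + s *\<^sub>R v) - h (x + s *\<^sub>R u) - h (x + s *\<^sub>R v) + h x"
    unfolding a by (simp add: algebra_simps)
  have "s^2 * A z = (h (x + s *\<^sub>R v + s *\<^sub>R u) - h (x + s *\<^sub>R v) - h (x + s *\<^sub>R u) + h x) \<bullet> w"
    using z(2) unfolding eqv by simp
  also have "\<dots> = s^2 * B z'" using z'(2) by simp
  finally have "s^2 * A z = s^2 * B z'" .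
  then have AB: "A z = B z'" using s by simp
  have "z \<in> cball x (s * (norm u + norm v))" using z(1) by (simp add: dist_commute)
  then have zU: "z \<in> U" using cb by (rule subsetD[rotated])
  have "z' \<in> cball x (s * (norm v + norm u))" using z'(1) by (simp add: dist_commute)
  then have zU': "z' \<in> U" using cb2 by (rule subsetD[rotated])
  have "dist z x < dA" using z(1) sm m(2) by linarith
  then have d1: "dist (A z) (A x) < e" using dA(2)[OF zU] by blast
  have "dist z' x < dB" using z'(1) sm m(3) by (simp add: add.commute)
  then have d2: "dist (B z') (B x) < e" using dB(2)[OF zU'] by blast
  have "\<bar>A x - B x\<bar> < 2 * e" using AB d1 d2 unfolding dist_real_def by linarith
  then show False using e unfolding e_def by (simp add: field_simps)
qed

lemma schwarz:
  fixes h :: "'a::euclidean_space \<Rightarrow> 'b::euclidean_space"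
  assumes U: "open U" and h: "smooth_on U h" and x: "x \<in> U"
  shows "D2 h x v u = D2 h x u v"
proof -
  have "(D2 h x v u - D2 h x u v) \<bullet> (D2 h x v u - D2 h x u v) = 0"
    using schwarz_inner[OF assms] by (simp add: inner_diff_left)
  then show ?thesis by simp
qed

lemma dd_push:
  fixes f :: "'a::euclidean_space \<Rightarrow> 'b::euclidean_space"
  assumes U: "open U" and f: "smooth_on U f" and A: "smooth_on U A" and B: "smooth_on U B" and x: "x \<in> U"
  shows "dd (push f B) A x = D2 f x (A x) (B x) + frechet_derivative f (at x) (dd B A x)"
  unfolding dd_def using frechet_derivative_at[OF push_has_deriv[OF U f B x]] by metis

lemma torsion_T:
  fixes f :: "'a::euclidean_space \<Rightarrow> 'b::euclidean_space"
  assumes U: "open U" and f: "smooth_on U f" and A: "smooth_on U A" and B: "smooth_on U B" and x: "x \<in> U"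
  shows "dd (push f B) A x - dd (push f A) B x = frechet_derivative f (at x) (dd B A x - dd A B x)"
proof -
  have lin: "linear (frechet_derivative f (at x))" by (rule smooth_linear_deriv[OF U f x])
  show ?thesis
    unfolding dd_push[OF U f A B x] dd_push[OF U f B A x] schwarz[OF U f x, of "A x" "B x"]
    using lin by (simp add: linear_diff)
qed

lemma compat_T:
  fixes f :: "'a::euclidean_space \<Rightarrow> 'b::euclidean_space"
  assumes U: "open U" and f: "smooth_on U f" and B: "smooth_on U B" and C: "smooth_on U C" and x: "x \<in> U"
  shows "dd (\<lambda>y. induced_metric f y (B y) (C y)) A x
     = dd (push f B) A x \<bullet> frechet_derivative f (at x) (C x) + frechet_derivative f (at x) (B x) \<bullet> dd (push f C) A x"
proof -
  have e: "(\<lambda>y. induced_metric f y (B y) (C y)) = (\<lambda>y. push f B y \<bullet> push f C y)"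
    by (simp add: induced_metric_def push_def)
  have hB: "(push f B has_derivative frechet_derivative (push f B) (at x)) (at x)"
    using push_has_deriv[OF U f B x] frechet_derivative_at[OF push_has_deriv[OF U f B x]] by metis
  have hC: "(push f C has_derivative frechet_derivative (push f C) (at x)) (at x)"
    using push_has_deriv[OF U f C x] frechet_derivative_at[OF push_has_deriv[OF U f C x]] by metis
  have "((\<lambda>y. push f B y \<bullet> push f C y) has_derivative
     (\<lambda>h. push f B x \<bullet> frechet_derivative (push f C) (at x) h + frechet_derivative (push f B) (at x) h \<bullet> push f C x)) (at x)"
    using has_derivative_inner[OF hB hC] by simp
  from frechet_derivative_at[OF this] have fd: "frechet_derivative (\<lambda>y. push f B y \<bullet> push f C y) (at x) =
     (\<lambda>h. push f B x \<bullet> frechet_derivative (push f C) (at x) h + frechet_derivative (push f B) (at x) h \<bullet> push f C x)"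
    by simp
  show ?thesis
    unfolding e dd_def fd by (simp add: push_def inner_commute)
qed

lemma koszul:
  fixes NXW NWX NXZ NZX NWZ NZW FX FW FZ tXW tXZ tWZ :: "'b::real_inner"
  assumes "d1 = NXW \<bullet> FZ + FW \<bullet> NXZ" "d2 = NWX \<bullet> FZ + FX \<bullet> NWZ" "d3 = NZX \<bullet> FW + FX \<bullet> NZW"
    "NXW - NWX = tXW" "NXZ - NZX = tXZ" "NWZ - NZW = tWZ"
  shows "2 * (NXW \<bullet> FZ) = d1 + d2 - d3 + tXW \<bullet> FZ - tXZ \<bullet> FW - tWZ \<bullet> FX"
  unfolding assms(4-6)[symmetric] assms(1-3) by (simp add: inner_diff_left inner_commute algebra_simps)

lemma key_lc:
  fixes f :: "'a::euclidean_space \<Rightarrow> 'b::euclidean_space"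
  assumes U: "open U" and f: "smooth_on U f" and lc: "levi_civita U (induced_metric f) nab"
    and X: "smooth_on U X" and W: "smooth_on U W" and x: "x \<in> U"
  shows "(dd (push f W) X x - frechet_derivative f (at x) (nab X W x)) \<bullet> frechet_derivative f (at x) c = 0"
proof -
  define Z :: "'a \<Rightarrow> 'a" where "Z = (\<lambda>_. c)"
  have Z: "smooth_on U Z" unfolding Z_def by (rule smooth_const)
  define F where "F = frechet_derivative f (at x)"
  have lin: "linear F" unfolding F_def by (rule smooth_linear_deriv[OF U f x])
  define T where "T = (\<lambda>A B. dd (push f B) A x)"
  have comp: "\<And>X Y Z :: 'a \<Rightarrow> 'a. smooth_on U X \<Longrightarrow> smooth_on U Y \<Longrightarrow> smooth_on U Z \<Longrightarrow>
        dd (\<lambda>y. induced_metric f y (Y y) (Z y)) X x = F (nab X Y x) \<bullet> F (Z x) + F (Y x) \<bullet> F (nab X Z x)"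
    using lc x unfolding levi_civita_def induced_metric_def F_def by blast
  have tor: "\<And>X Y :: 'a \<Rightarrow> 'a. smooth_on U X \<Longrightarrow> smooth_on U Y \<Longrightarrow>
        F (nab X Y x) - F (nab Y X x) = F (dd Y X x - dd X Y x)"
  proof -
    fix X Y :: "'a \<Rightarrow> 'a" assume "smooth_on U X" "smooth_on U Y"
    then have "nab X Y x - nab Y X x = dd Y X x - dd X Y x" using lc x unfolding levi_civita_def by blast
    then have "F (nab X Y x - nab Y X x) = F (dd Y X x - dd X Y x)" by simp
    then show "F (nab X Y x) - F (nab Y X x) = F (dd Y X x - dd X Y x)" using lin by (simp add: linear_diff)
  qed
  have compT: "\<And>X Y Z :: 'a \<Rightarrow> 'a. smooth_on U Y \<Longrightarrow> smooth_on U Z \<Longrightarrow>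
        dd (\<lambda>y. induced_metric f y (Y y) (Z y)) X x = T X Y \<bullet> F (Z x) + F (Y x) \<bullet> T X Z"
    unfolding T_def F_def by (rule compat_T[OF U f _ _ x])
  have torT: "\<And>X Y :: 'a \<Rightarrow> 'a. smooth_on U X \<Longrightarrow> smooth_on U Y \<Longrightarrow> T X Y - T Y X = F (dd Y X x - dd X Y x)"
    unfolding T_def F_def by (rule torsion_T[OF U f _ _ x])
  have k1: "2 * (F (nab X W x) \<bullet> F (Z x)) =
      dd (\<lambda>y. induced_metric f y (W y) (Z y)) X x + dd (\<lambda>y. induced_metric f y (X y) (Z y)) W x
      - dd (\<lambda>y. induced_metric f y (X y) (W y)) Z x
      + F (dd W X x - dd X W x) \<bullet> F (Z x) - F (dd Z X x - dd X Z x) \<bullet> F (W x) - F (dd Z W x - dd W Z x) \<bullet> F (X x)"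
    by (rule koszul[OF comp[OF X W Z] comp[OF W X Z] comp[OF Z X W] tor[OF X W] tor[OF X Z] tor[OF W Z]])
  have k2: "2 * (T X W \<bullet> F (Z x)) =
      dd (\<lambda>y. induced_metric f y (W y) (Z y)) X x + dd (\<lambda>y. induced_metric f y (X y) (Z y)) W x
      - dd (\<lambda>y. induced_metric f y (X y) (W y)) Z x
      + F (dd W X x - dd X W x) \<bullet> F (Z x) - F (dd Z X x - dd X Z x) \<bullet> F (W x) - F (dd Z W x - dd W Z x) \<bullet> F (X x)"
    by (rule koszul[OF compT[OF W Z] compT[OF X Z] compT[OF X W] torT[OF X W] torT[OF X Z] torT[OF W Z]])
  from k1 k2 have "T X W \<bullet> F (Z x) = F (nab X W x) \<bullet> F (Z x)" by simp
  then show ?thesis unfolding T_def F_def Z_def by (simp add: inner_diff_left)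
qed

lemma normal_part_unique:
  fixes f :: "'a::euclidean_space \<Rightarrow> 'b::euclidean_space"
  assumes lin: "linear (frechet_derivative f (at x))"
    and n: "\<forall>v. n \<bullet> frechet_derivative f (at x) v = 0" "w - n \<in> range (frechet_derivative f (at x))"
  shows "normal_part f x w = n"
  unfolding normal_part_def
proof (rule the_equality)
  show "(\<forall>v. n \<bullet> frechet_derivative f (at x) v = 0) \<and> w - n \<in> range (frechet_derivative f (at x))" using n by blast
  fix m assume m: "(\<forall>v. m \<bullet> frechet_derivative f (at x) v = 0) \<and> w - m \<in> range (frechet_derivative f (at x))"
  have sub: "subspace (range (frechet_derivative f (at x)))"
    using linear_subspace_image[OF lin subspace_UNIV] .
  have "(w - n) - (w - m) \<in> range (frechet_derivative f (at x))"
    using subspace_diff[OF sub] m n by blast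
  then obtain v where v: "m - n = frechet_derivative f (at x) v" by (auto simp: algebra_simps)
  have "(m - n) \<bullet> (m - n) = (m - n) \<bullet> frechet_derivative f (at x) v" using v by simp
  also have "\<dots> = m \<bullet> frechet_derivative f (at x) v - n \<bullet> frechet_derivative f (at x) v"
    by (simp add: inner_diff_left)
  also have "\<dots> = 0" using m n by simp
  finally have "(m - n) \<bullet> (m - n) = 0" .
  then show "m = n" by simp
qed

lemma normal_part_exists:
  fixes f :: "'a::euclidean_space \<Rightarrow> 'b::euclidean_space"
  assumes lin: "linear (frechet_derivative f (at x))"
  shows "\<exists>n. (\<forall>v. n \<bullet> frechet_derivative f (at x) v = 0) \<and> w - n \<in> range (frechet_derivative f (at x))"
proof -
  have sub: "subspace (range (frechet_derivative f (at x)))"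
    using linear_subspace_image[OF lin subspace_UNIV] .
  obtain y z where y: "y \<in> span (range (frechet_derivative f (at x)))"
    and z: "\<And>u. u \<in> span (range (frechet_derivative f (at x))) \<Longrightarrow> orthogonal z u" and w: "w = y + z"
    using orthogonal_subspace_decomp_exists[of "range (frechet_derivative f (at x))" w] by blast
  have sp: "span (range (frechet_derivative f (at x))) = range (frechet_derivative f (at x))"
    using sub by simp
  show ?thesis
  proof (intro exI conjI allI)
    fix v show "z \<bullet> frechet_derivative f (at x) v = 0"
      using z[of "frechet_derivative f (at x) v"] unfolding sp orthogonal_def by auto
  next
    show "w - z \<in> range (frechet_derivative f (at x))" using y w sp by simp
  qed
qed

lemma normal_part_diff:
  fixes f :: "'a::euclidean_space \<Rightarrow> 'b::euclidean_space"
  assumes lin: "linear (frechet_derivative f (at x))"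
    and d: "w1 - w2 \<in> range (frechet_derivative f (at x))"
  shows "normal_part f x w1 = normal_part f x w2"
proof -
  obtain n where n: "\<forall>v. n \<bullet> frechet_derivative f (at x) v = 0" "w2 - n \<in> range (frechet_derivative f (at x))"
    using normal_part_exists[OF lin] by blast
  have sub: "subspace (range (frechet_derivative f (at x)))"
    using linear_subspace_image[OF lin subspace_UNIV] .
  have "(w1 - w2) + (w2 - n) \<in> range (frechet_derivative f (at x))"
    using subspace_add[OF sub d n(2)] .
  then have "w1 - n \<in> range (frechet_derivative f (at x))" by simp
  then show ?thesis using normal_part_unique[OF lin n(1)] n(2) by simp
qed

theorem proposition2p2:
  fixes U :: "'a::euclidean_space set"
    and f g :: "'a \<Rightarrow> 'b::euclidean_space"
    and \<Phi> :: "'a \<Rightarrow> 'a \<Rightarrow> 'a"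
    and nab nabt :: "('a \<Rightarrow> 'a) \<Rightarrow> ('a \<Rightarrow> 'a) \<Rightarrow> 'a \<Rightarrow> 'a"
    and X Y :: "'a \<Rightarrow> 'a"
  assumes "open U"
    and "immersion U f" and "immersion U g"
    and "\<forall>x\<in>U. linear (\<Phi> x)"
    and "\<forall>v. smooth_on U (\<lambda>x. \<Phi> x v)"
    and "\<forall>x\<in>U. \<forall>v. frechet_derivative g (at x) v = frechet_derivative f (at x) (\<Phi> x v)"
    and "levi_civita U (induced_metric f) nab"
    and "levi_civita U (induced_metric g) nabt"
    and "smooth_on U X" and "smooth_on U Y"
    and "x \<in> U"
  shows "\<Phi> x (nabt X Y x) = nab X (\<lambda>y. \<Phi> y (Y y)) x \<and>
         sff g X Y x = sff f (\<lambda>y. \<Phi> y (X y)) Y x"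
proof -
  note U = assms(1) and lin\<Phi> = assms(4) and s\<Phi> = assms(5) and gf = assms(6)
    and lcf = assms(7) and lcg = assms(8) and X = assms(9) and Y = assms(10) and x = assms(11)
  have f: "smooth_on U f" and injf: "inj (frechet_derivative f (at x))"
    using assms(2) x unfolding immersion_def by auto
  have g: "smooth_on U g" and injg: "inj (frechet_derivative g (at x))"
    using assms(3) x unfolding immersion_def by auto
  define W where "W = (\<lambda>y. \<Phi> y (Y y))"
  define V where "V = (\<lambda>y. \<Phi> y (X y))"
  have W: "smooth_on U W" unfolding W_def by (rule smooth_Phi[OF U lin\<Phi> s\<Phi> Y])
  have V: "smooth_on U V" unfolding V_def by (rule smooth_Phi[OF U lin\<Phi> s\<Phi> X])
  define Df where "Df = frechet_derivative f (at x)"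
  define Dg where "Dg = frechet_derivative g (at x)"
  have linf: "linear Df" unfolding Df_def by (rule smooth_linear_deriv[OF U f x])
  have ling: "linear Dg" unfolding Dg_def by (rule smooth_linear_deriv[OF U g x])
  have gfx: "\<And>v. Dg v = Df (\<Phi> x v)" using gf x unfolding Df_def Dg_def by blast
  have injP: "inj (\<Phi> x)"
    using injg unfolding Dg_def[symmetric] by (metis gfx injD injI)
  have surjP: "surj (\<Phi> x)"
    using linear_injective_imp_surjective[OF _ injP] lin\<Phi> x by blast
  have rng: "range Dg = range Df"
  proof
    show "range Dg \<subseteq> range Df" using gfx by auto
    show "range Df \<subseteq> range Dg"
    proof
      fix z assume "z \<in> range Df"
      then obtain c where c: "z = Df c" by blast
      obtain c' where "c = \<Phi> x c'" using surjP by (metis surjD)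
      then show "z \<in> range Dg" using c gfx by auto
    qed
  qed
  have pushY: "\<And>y. y \<in> U \<Longrightarrow> push g Y y = push f W y"
    using gf unfolding push_def W_def by blast
  have pushX: "\<And>y. y \<in> U \<Longrightarrow> push g X y = push f V y"
    using gf unfolding push_def V_def by blast
  have TY: "dd (push g Y) X x = dd (push f W) X x"
    unfolding dd_def using frechet_local[OF U x pushY] by simp
  have TX: "dd (push g X) Y x = dd (push f V) Y x"
    unfolding dd_def using frechet_local[OF U x pushX] by simp
  have kf: "\<And>c. (dd (push f W) X x - Df (nab X W x)) \<bullet> Df c = 0"
    unfolding Df_def by (rule key_lc[OF U f lcf X W x])
  have kg: "\<And>c. (dd (push g Y) X x - Dg (nabt X Y x)) \<bullet> Dg c = 0"
    unfolding Dg_def by (rule key_lc[OF U g lcg X Y x])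
  have kg': "(dd (push f W) X x - Df (\<Phi> x (nabt X Y x))) \<bullet> Df c = 0" for c
  proof -
    obtain c' where "c = \<Phi> x c'" using surjP by (metis surjD)
    then show ?thesis using kg[of c'] unfolding TY gfx by simp
  qed
  define d where "d = Df (\<Phi> x (nabt X Y x)) - Df (nab X W x)"
  have "d = (dd (push f W) X x - Df (nab X W x)) - (dd (push f W) X x - Df (\<Phi> x (nabt X Y x)))"
    unfolding d_def by simp
  moreover have "d = Df (\<Phi> x (nabt X Y x) - nab X W x)" unfolding d_def using linf by (simp add: linear_diff)
  ultimately have "d \<bullet> d = 0"
    using kf[of "\<Phi> x (nabt X Y x) - nab X W x"] kg'[of "\<Phi> x (nabt X Y x) - nab X W x"]
    by (metis inner_diff_left diff_self)
  then have "Df (\<Phi> x (nabt X Y x)) = Df (nab X W x)" unfolding d_def by simp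
  then have c1: "\<Phi> x (nabt X Y x) = nab X W x" using injf unfolding Df_def[symmetric] by (meson injD)
  have np: "normal_part g x = normal_part f x"
  proof -
    have "(\<forall>v. n \<bullet> Dg v = 0) \<longleftrightarrow> (\<forall>v. n \<bullet> Df v = 0)" for n
    proof -
      have "(\<forall>v. n \<bullet> Dg v = 0) \<longleftrightarrow> (\<forall>z\<in>range Dg. n \<bullet> z = 0)" by auto
      also have "\<dots> \<longleftrightarrow> (\<forall>z\<in>range Df. n \<bullet> z = 0)" using rng by simp
      also have "\<dots> \<longleftrightarrow> (\<forall>v. n \<bullet> Df v = 0)" by auto
      finally show ?thesis .
    qed
    then show ?thesis unfolding normal_part_def Dg_def[symmetric] Df_def[symmetric] rng by simp
  qed
  have t1: "dd (push g Y) X x - dd (push g X) Y x \<in> range Df"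
    using torsion_T[OF U g X Y x] rng unfolding Dg_def[symmetric] by auto
  have t2: "dd (push f V) Y x - dd (push f Y) V x \<in> range Df"
    using torsion_T[OF U f Y V x] unfolding Df_def[symmetric] by auto
  have sub: "subspace (range Df)" using linear_subspace_image[OF linf subspace_UNIV] .
  have "(dd (push g Y) X x - dd (push g X) Y x) + (dd (push f V) Y x - dd (push f Y) V x) \<in> range Df"
    by (rule subspace_add[OF sub t1 t2])
  then have "dd (push g Y) X x - dd (push f Y) V x \<in> range Df" unfolding TX by simp
  then have c2: "normal_part f x (dd (push g Y) X x) = normal_part f x (dd (push f Y) V x)"
    using normal_part_diff[OF linf[unfolded Df_def]] unfolding Df_def by blast
  show ?thesis
    using c1 c2 np unfolding W_def V_def sff_def by simp
qed

end
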